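(* For every sequent $\Gamma\Rightarrow\Delta$ of the logic $\mathtt{TPDL}$: if $\Gamma\Rightarrow\Delta$ is provable in the sequent calculus $\mathtt{GTPDL}$, then $M\models\Gamma\Rightarrow\Delta$ for every model $M$ (i.e. $\Gamma\Rightarrow\Delta$ is valid).
   Context: Fix sets $\mathsf{Prop}$ of propositional variables and $\mathsf{AtProg}$ of atomic programs. Formulas and programs of $\mathtt{TPDL}$ are defined by mutual induction: $\varphi ::= \bot \mid p \mid (\varphi\to\varphi) \mid [\pi]\varphi \mid [\pi]^{\leftarrow}\varphi$ and $\pi ::= \alpha \mid \pi;\pi \mid \pi\cup\pi \mid \pi^{*} \mid \varphi?$, where $p\in\mathsf{Prop}$, $\alpha\in\mathsf{AtProg}$ ($[\pi]^{\leftarrow}$ is the backwards box). Abbreviations: $\neg\varphi:=\varphi\to\bot$, $\langle\pi\rangle\varphi:=\neg[\pi]\neg\varphi$, $\langle\pi\rangle^{\leftarrow}\varphi:=\neg[\pi]^{\leftarrow}\neg\varphi$; for a set $\Gamma$ of formulas, $[\pi]\Gamma=\{[\pi]\varphi:\varphi\in\Gamma\}$ and $[\pi]^{\leftarrow}\Gamma=\{[\pi]^{\leftarrow}\varphi:\varphi\in\Gamma\}$. A model is $M=(W,(R_\alpha)_{\alpha\in\mathsf{AtProg}},V)$ with $W$ a nonempty set of states, $R_\alpha\subseteq W\times W$, $V:W\to\mathcal P(\mathsf{Prop})$. Relations $R_\pi$: $R_{\pi_0;\pi_1}$ is the composition ($w R v$ iff $wR_{\pi_0}u R_{\pi_1}v$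 for some $u$), $R_{\pi_0\cup\pi_1}=R_{\pi_0}\cup R_{\pi_1}$, $R_{\pi^*}$ is the reflexive–transitive closure of $R_\pi$, $R_{\psi?}=\{(w,w):M,w\models\psi\}$. Satisfaction: $M,w\not\models\bot$; $M,w\models p$ iff $p\in V(w)$; $\to$ classical; $M,w\models[\pi]\varphi$ iff $M,v\models\varphi$ for all $v$ with $wR_\pi v$; $M,w\models[\pi]^{\leftarrow}\varphi$ iff $M,v\models\varphi$ for all $v$ with $vR_\pi w$. A sequent $\Gamma\Rightarrow\Delta$ is a pair of finite sets of formulas (commas denote union). $M,w\models\Gamma\Rightarrow\Delta$ means: if $M,w\models\varphi$ for all $\varphi\in\Gamma$ then $M,w\models\psi$ for some $\psi\in\Delta$; $M\models\Gamma\Rightarrow\Delta$ means this holds at every state; valid means $M\models\Gamma\Rightarrow\Delta$ for every model $M$. $\mathtt{GTPDL}$ rules (premises / conclusion): (Ax) no premise, conclusion $\Gamma\Rightarrow\Delta$ with $\Gamma\cap\Delta\neq\emptyset$; ($\bot$) no premise, conclusion $\Gamma,\bot\Rightarrow\Delta$; ($\to$L) $\Gamma\Rightarrow\varphi,\Delta$ and $\Gamma,\psi\Rightarrow\Delta$ / $\Gamma,\varphi\to\psi\Rightarrow\Delta$; ($\to$R) $\Gamma,\varphi\Rightarrow\psi,\Delta$ / $\Gamma\Rightarrow\varphi\to\psi,\Delta$; (Wk) $\Gamma\Rightarrow\Delta$ / $\Gamma'\Rightarrow\Delta'$ with $\Gamma\subseteq\Gamma'$, $\Delta\subseteq\Delta'$;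 (Cut) $\Gamma\Rightarrow\varphi,\Delta$ and $\Gamma,\varphi\Rightarrow\Delta$ / $\Gamma\Rightarrow\Delta$; ($[\,]$) $\Gamma\Rightarrow\varphi,[\pi]^{\leftarrow}\Delta$ / $[\pi]\Gamma\Rightarrow[\pi]\varphi,\Delta$; ($[\,]^{\leftarrow}$) $\Gamma\Rightarrow\varphi,[\pi]\Delta$ / $[\pi]^{\leftarrow}\Gamma\Rightarrow[\pi]^{\leftarrow}\varphi,\Delta$; ($[;]$L) $\Gamma,[\pi_0][\pi_1]\varphi\Rightarrow\Delta$ / $\Gamma,[\pi_0;\pi_1]\varphi\Rightarrow\Delta$; ($[;]$R) $\Gamma\Rightarrow[\pi_0][\pi_1]\varphi,\Delta$ / $\Gamma\Rightarrow[\pi_0;\pi_1]\varphi,\Delta$; ($[\cup]$L) $\Gamma,[\pi_0]\varphi,[\pi_1]\varphi\Rightarrow\Delta$ / $\Gamma,[\pi_0\cup\pi_1]\varphi\Rightarrow\Delta$; ($[\cup]$R) $\Gamma\Rightarrow\Delta,[\pi_0]\varphi$ and $\Gamma\Rightarrow\Delta,[\pi_1]\varphi$ / $\Gamma\Rightarrow[\pi_0\cup\pi_1]\varphi,\Delta$; ($[*]$L) $\Gamma,\varphi,[\pi][\pi^*]\varphi\Rightarrow\Delta$ / $\Gamma,[\pi^*]\varphi\Rightarrow\Delta$; ($[*]$R) $\Gamma,\varphi\Rightarrow[\pi]\varphi$ / $[\pi^*]\Gamma,\varphi\Rightarrow[\pi^*]\varphi$; ($[?]$L) $\Gamma\Rightarrow\varphi,\Delta$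 and $\Gamma,\psi\Rightarrow\Delta$ / $\Gamma,[\varphi?]\psi\Rightarrow\Delta$; ($[?]$R) $\Gamma,\varphi\Rightarrow\psi,\Delta$ / $\Gamma\Rightarrow[\varphi?]\psi,\Delta$. A $\mathtt{GTPDL}$ proof of a sequent is a finite tree of sequents with that sequent at the root, each node being the conclusion of an instance of a rule whose premises are its children (so every leaf is an instance of Ax or $\bot$); a sequent is provable in $\mathtt{GTPDL}$ if it has such a proof. *)

theory Defs
  imports Main "HOL-Library.FSet"
begin

datatype ('p, 'a) fm =
    Bot
  | Var 'p
  | Imp "('p, 'a) fm" "('p, 'a) fm"
  | Box "('p, 'a) prog" "('p, 'a) fm"
  | BBox "('p, 'a) prog" "('p, 'a) fm"
and ('p, 'a) prog =
    Atom 'a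
  | Seq "('p, 'a) prog" "('p, 'a) prog"
  | Choice "('p, 'a) prog" "('p, 'a) prog"
  | Star "('p, 'a) prog"
  | Test "('p, 'a) fm"

record ('p, 'a, 's) model =
  W :: "'s set"
  R :: "'a \<Rightarrow> ('s \<times> 's) set"
  V :: "'s \<Rightarrow> 'p set"

definition is_model :: "('p, 'a, 's) model \<Rightarrow> bool" where
  "is_model M \<longleftrightarrow> W M \<noteq> {} \<and> (\<forall>\<alpha>. R M \<alpha> \<subseteq> W M \<times> W M)"

fun sat :: "('p, 'a, 's) model \<Rightarrow> 's \<Rightarrow> ('p, 'a) fm \<Rightarrow> bool"
and rel :: "('p, 'a, 's) model \<Rightarrow> ('p, 'a) prog \<Rightarrow> ('s \<times> 's) set" where
  "sat M w Bot = False"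
| "sat M w (Var p) = (p \<in> V M w)"
| "sat M w (Imp \<phi> \<psi>) = (sat M w \<phi> \<longrightarrow> sat M w \<psi>)"
| "sat M w (Box \<pi> \<phi>) = (\<forall>v. (w, v) \<in> rel M \<pi> \<longrightarrow> sat M v \<phi>)"
| "sat M w (BBox \<pi> \<phi>) = (\<forall>v. (v, w) \<in> rel M \<pi> \<longrightarrow> sat M v \<phi>)"
| "rel M (Atom \<alpha>) = R M \<alpha>"
| "rel M (Seq \<pi>0 \<pi>1) = rel M \<pi>0 O rel M \<pi>1"
| "rel M (Choice \<pi>0 \<pi>1) = rel M \<pi>0 \<union> rel M \<pi>1"
| "rel M (Star \<pi>) = Id_on (W M) \<union> (rel M \<pi>)\<^sup>+"
| "rel M (Test \<psi>) = {(w, w) | w. w \<in> W M \<and> sat M w \<psi>}"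

definition sat_seq :: "('p, 'a, 's) model \<Rightarrow> 's \<Rightarrow> ('p, 'a) fm fset \<Rightarrow> ('p, 'a) fm fset \<Rightarrow> bool" where
  "sat_seq M w \<Gamma> \<Delta> \<longleftrightarrow> ((\<forall>\<phi>. \<phi> |\<in>| \<Gamma> \<longrightarrow> sat M w \<phi>) \<longrightarrow> (\<exists>\<psi>. \<psi> |\<in>| \<Delta> \<and> sat M w \<psi>))"

definition model_sat_seq :: "('p, 'a, 's) model \<Rightarrow> ('p, 'a) fm fset \<Rightarrow> ('p, 'a) fm fset \<Rightarrow> bool" where
  "model_sat_seq M \<Gamma> \<Delta> \<longleftrightarrow> (\<forall>w \<in> W M. sat_seq M w \<Gamma> \<Delta>)"

abbreviation boxes :: "('p, 'a) prog \<Rightarrow> ('p, 'a) fm fset \<Rightarrow> ('p, 'a) fm fset" where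
  "boxes \<pi> \<Gamma> \<equiv> fimage (Box \<pi>) \<Gamma>"

abbreviation bboxes :: "('p, 'a) prog \<Rightarrow> ('p, 'a) fm fset \<Rightarrow> ('p, 'a) fm fset" where
  "bboxes \<pi> \<Gamma> \<equiv> fimage (BBox \<pi>) \<Gamma>"

inductive provable :: "('p, 'a) fm fset \<Rightarrow> ('p, 'a) fm fset \<Rightarrow> bool" where
  Ax: "\<Gamma> |\<inter>| \<Delta> \<noteq> {||} \<Longrightarrow> provable \<Gamma> \<Delta>"
| BotL: "provable (finsert Bot \<Gamma>) \<Delta>"
| ImpL: "provable \<Gamma> (finsert \<phi> \<Delta>) \<Longrightarrow> provable (finsert \<psi> \<Gamma>) \<Delta>
         \<Longrightarrow> provable (finsert (Imp \<phi> \<psi>) \<Gamma>) \<Delta>"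
| ImpR: "provable (finsert \<phi> \<Gamma>) (finsert \<psi> \<Delta>) \<Longrightarrow> provable \<Gamma> (finsert (Imp \<phi> \<psi>) \<Delta>)"
| Wk: "provable \<Gamma> \<Delta> \<Longrightarrow> \<Gamma> |\<subseteq>| \<Gamma>' \<Longrightarrow> \<Delta> |\<subseteq>| \<Delta>' \<Longrightarrow> provable \<Gamma>' \<Delta>'"
| Cut: "provable \<Gamma> (finsert \<phi> \<Delta>) \<Longrightarrow> provable (finsert \<phi> \<Gamma>) \<Delta> \<Longrightarrow> provable \<Gamma> \<Delta>"
| BoxR: "provable \<Gamma> (finsert \<phi> (bboxes \<pi> \<Delta>))
         \<Longrightarrow> provable (boxes \<pi> \<Gamma>) (finsert (Box \<pi> \<phi>) \<Delta>)"
| BBoxR: "provable \<Gamma> (finsert \<phi> (boxes \<pi> \<Delta>))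
         \<Longrightarrow> provable (bboxes \<pi> \<Gamma>) (finsert (BBox \<pi> \<phi>) \<Delta>)"
| SeqL: "provable (finsert (Box \<pi>0 (Box \<pi>1 \<phi>)) \<Gamma>) \<Delta>
         \<Longrightarrow> provable (finsert (Box (Seq \<pi>0 \<pi>1) \<phi>) \<Gamma>) \<Delta>"
| SeqR: "provable \<Gamma> (finsert (Box \<pi>0 (Box \<pi>1 \<phi>)) \<Delta>)
         \<Longrightarrow> provable \<Gamma> (finsert (Box (Seq \<pi>0 \<pi>1) \<phi>) \<Delta>)"
| ChoiceL: "provable (finsert (Box \<pi>0 \<phi>) (finsert (Box \<pi>1 \<phi>) \<Gamma>)) \<Delta>
         \<Longrightarrow> provable (finsert (Box (Choice \<pi>0 \<pi>1) \<phi>) \<Gamma>) \<Delta>"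
| ChoiceR: "provable \<Gamma> (finsert (Box \<pi>0 \<phi>) \<Delta>) \<Longrightarrow> provable \<Gamma> (finsert (Box \<pi>1 \<phi>) \<Delta>)
         \<Longrightarrow> provable \<Gamma> (finsert (Box (Choice \<pi>0 \<pi>1) \<phi>) \<Delta>)"
| StarL: "provable (finsert \<phi> (finsert (Box \<pi> (Box (Star \<pi>) \<phi>)) \<Gamma>)) \<Delta>
         \<Longrightarrow> provable (finsert (Box (Star \<pi>) \<phi>) \<Gamma>) \<Delta>"
| StarR: "provable (finsert \<phi> \<Gamma>) {|Box \<pi> \<phi>|}
         \<Longrightarrow> provable (finsert \<phi> (boxes (Star \<pi>) \<Gamma>)) {|Box (Star \<pi>) \<phi>|}"
| TestL: "provable \<Gamma> (finsert \<phi> \<Delta>) \<Longrightarrow> provable (finsert \<psi> \<Gamma>) \<Delta>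
         \<Longrightarrow> provable (finsert (Box (Test \<phi>) \<psi>) \<Gamma>) \<Delta>"
| TestR: "provable (finsert \<phi> \<Gamma>) (finsert \<psi> \<Delta>) \<Longrightarrow> provable \<Gamma> (finsert (Box (Test \<phi>) \<psi>) \<Delta>)"

end

theory Submission
  imports Defs
begin

lemma rel_W: "is_model M \<Longrightarrow> rel M \<pi> \<subseteq> W M \<times> W M"
proof (induction \<pi>)
  case (Star \<pi>)
  then show ?case
    using trancl_subset_Sigma[of "rel M \<pi>" "W M"] by (auto simp: Id_on_def)
qed (auto simp: is_model_def)

lemma star_reach:
  assumes "(w, v) \<in> (rel M \<pi>)\<^sup>*" "P w" "\<And>x y. P x \<Longrightarrow> (w, x) \<in> (rel M \<pi>)\<^sup>* \<Longrightarrow> (x, y) \<in> rel M \<pi> \<Longrightarrow> P y"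
  shows "P v"
  using assms(1,2)
proof (induction rule: rtrancl_induct)
  case (step y z)
  then show ?case using assms(3) by blast
qed auto

lemma ImpL_w: "sat_seq M w \<Gamma> (finsert \<phi> \<Delta>) \<Longrightarrow> sat_seq M w (finsert \<psi> \<Gamma>) \<Delta> \<Longrightarrow> sat_seq M w (finsert (Imp \<phi> \<psi>) \<Gamma>) \<Delta>"
  by (auto simp: sat_seq_def)
lemma ImpR_w: "sat_seq M w (finsert \<phi> \<Gamma>) (finsert \<psi> \<Delta>) \<Longrightarrow> sat_seq M w \<Gamma> (finsert (Imp \<phi> \<psi>) \<Delta>)"
  by (auto simp: sat_seq_def)
lemma Wk_w: "sat_seq M w \<Gamma> \<Delta> \<Longrightarrow> \<Gamma> |\<subseteq>| \<Gamma>' \<Longrightarrow> \<Delta> |\<subseteq>| \<Delta>' \<Longrightarrow> sat_seq M w \<Gamma>' \<Delta>'"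
  unfolding sat_seq_def by blast
lemma Cut_w: "sat_seq M w \<Gamma> (finsert \<phi> \<Delta>) \<Longrightarrow> sat_seq M w (finsert \<phi> \<Gamma>) \<Delta> \<Longrightarrow> sat_seq M w \<Gamma> \<Delta>"
  by (auto simp: sat_seq_def)
lemma Seq_eq: "sat M w (Box (Seq \<pi>0 \<pi>1) \<phi>) = sat M w (Box \<pi>0 (Box \<pi>1 \<phi>))"
  by auto
lemma Choice_eq: "sat M w (Box (Choice \<pi>0 \<pi>1) \<phi>) = (sat M w (Box \<pi>0 \<phi>) \<and> sat M w (Box \<pi>1 \<phi>))"
  by auto
lemma SeqL_w: "sat_seq M w (finsert (Box \<pi>0 (Box \<pi>1 \<phi>)) \<Gamma>) \<Delta> \<Longrightarrow> sat_seq M w (finsert (Box (Seq \<pi>0 \<pi>1) \<phi>) \<Gamma>) \<Delta>"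
  by (auto simp: sat_seq_def)
lemma SeqR_w: "sat_seq M w \<Gamma> (finsert (Box \<pi>0 (Box \<pi>1 \<phi>)) \<Delta>) \<Longrightarrow> sat_seq M w \<Gamma> (finsert (Box (Seq \<pi>0 \<pi>1) \<phi>) \<Delta>)"
  unfolding sat_seq_def by (metis Seq_eq finsert_iff)
lemma ChoiceL_w: "sat_seq M w (finsert (Box \<pi>0 \<phi>) (finsert (Box \<pi>1 \<phi>) \<Gamma>)) \<Delta> \<Longrightarrow> sat_seq M w (finsert (Box (Choice \<pi>0 \<pi>1) \<phi>) \<Gamma>) \<Delta>"
  by (auto simp: sat_seq_def)
lemma ChoiceR_w: "sat_seq M w \<Gamma> (finsert (Box \<pi>0 \<phi>) \<Delta>) \<Longrightarrow> sat_seq M w \<Gamma> (finsert (Box \<pi>1 \<phi>) \<Delta>) \<Longrightarrow> sat_seq M w \<Gamma> (finsert (Box (Choice \<pi>0 \<pi>1) \<phi>) \<Delta>)"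
  unfolding sat_seq_def by (metis Choice_eq finsert_iff)
lemma TestL_w: "w \<in> W M \<Longrightarrow> sat_seq M w \<Gamma> (finsert \<phi> \<Delta>) \<Longrightarrow> sat_seq M w (finsert \<psi> \<Gamma>) \<Delta> \<Longrightarrow> sat_seq M w (finsert (Box (Test \<phi>) \<psi>) \<Gamma>) \<Delta>"
  by (auto simp: sat_seq_def)
lemma TestR_w: "sat_seq M w (finsert \<phi> \<Gamma>) (finsert \<psi> \<Delta>) \<Longrightarrow> sat_seq M w \<Gamma> (finsert (Box (Test \<phi>) \<psi>) \<Delta>)"
  by (auto simp: sat_seq_def)

lemma Ax_w: "\<Gamma> |\<inter>| \<Delta> \<noteq> {||} \<Longrightarrow> sat_seq M w \<Gamma> \<Delta>"
proof -
  assume "\<Gamma> |\<inter>| \<Delta> \<noteq> {||}"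
  then obtain x where "x |\<in>| \<Gamma>" "x |\<in>| \<Delta>" by fastforce
  then show ?thesis unfolding sat_seq_def by blast
qed
lemma BotL_w: "sat_seq M w (finsert Bot \<Gamma>) \<Delta>"
  unfolding sat_seq_def by (metis finsertI1 sat.simps(1))

lemma sound: "provable \<Gamma> \<Delta> \<Longrightarrow> is_model M \<Longrightarrow> \<forall>w\<in>W M. sat_seq M w \<Gamma> \<Delta>"
proof (induction rule: provable.induct)
  case (Ax \<Gamma> \<Delta>)
  show ?case by (intro ballI Ax_w Ax.hyps)
next
  case (BotL \<Gamma> \<Delta>)
  show ?case by (intro ballI BotL_w)
next
  case (ImpL \<Gamma> \<phi> \<Delta> \<psi>)
  show ?case by (rule ballI, rule ImpL_w[OF bspec[OF ImpL.IH(1)[OF ImpL.prems]] bspec[OF ImpL.IH(2)[OF ImpL.prems]]], assumption+)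
next
  case (ImpR \<phi> \<Gamma> \<psi> \<Delta>)
  show ?case by (rule ballI, rule ImpR_w[OF bspec[OF ImpR.IH[OF ImpR.prems]]], assumption+)
next
  case (Wk \<Gamma> \<Delta> \<Gamma>' \<Delta>')
  show ?case by (rule ballI, rule Wk_w[OF bspec[OF Wk.IH[OF Wk.prems]] Wk.hyps(2) Wk.hyps(3)], assumption+)
next
  case (Cut \<Gamma> \<phi> \<Delta>)
  show ?case by (rule ballI, rule Cut_w[OF bspec[OF Cut.IH(1)[OF Cut.prems]] bspec[OF Cut.IH(2)[OF Cut.prems]]], assumption+)
next
  case (BoxR \<Gamma> \<phi> \<pi> \<Delta>)
  show ?case
  proof (intro ballI)
    fix w assume w: "w \<in> W M"
    show "sat_seq M w (boxes \<pi> \<Gamma>) (finsert (Box \<pi> \<phi>) \<Delta>)"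
      unfolding sat_seq_def
    proof (intro impI)
      assume G: "\<forall>\<chi>. \<chi> |\<in>| boxes \<pi> \<Gamma> \<longrightarrow> sat M w \<chi>"
      show "\<exists>\<psi>. \<psi> |\<in>| finsert (Box \<pi> \<phi>) \<Delta> \<and> sat M w \<psi>"
      proof (rule ccontr)
        assume N: "\<not> ?thesis"
        have "sat M w (Box \<pi> \<phi>)"
        proof (simp, intro allI impI)
          fix v assume wv: "(w, v) \<in> rel M \<pi>"
          hence v: "v \<in> W M" using rel_W[OF BoxR.prems] by auto
          have "\<forall>\<chi>. \<chi> |\<in>| \<Gamma> \<longrightarrow> sat M v \<chi>" using G wv by auto
          moreover have "sat_seq M v \<Gamma> (finsert \<phi> (bboxes \<pi> \<Delta>))"
            using BoxR.IH[OF BoxR.prems] v by blast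
          ultimately have "\<exists>\<psi>. \<psi> |\<in>| finsert \<phi> (bboxes \<pi> \<Delta>) \<and> sat M v \<psi>"
            unfolding sat_seq_def by blast
          then show "sat M v \<phi>" using N wv by auto
        qed
        then show False using N by auto
      qed
    qed
  qed
next
  case (BBoxR \<Gamma> \<phi> \<pi> \<Delta>)
  show ?case
  proof (intro ballI)
    fix w assume w: "w \<in> W M"
    show "sat_seq M w (bboxes \<pi> \<Gamma>) (finsert (BBox \<pi> \<phi>) \<Delta>)"
      unfolding sat_seq_def
    proof (intro impI)
      assume G: "\<forall>\<chi>. \<chi> |\<in>| bboxes \<pi> \<Gamma> \<longrightarrow> sat M w \<chi>"
      show "\<exists>\<psi>. \<psi> |\<in>| finsert (BBox \<pi> \<phi>) \<Delta> \<and> sat M w \<psi>"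
      proof (rule ccontr)
        assume N: "\<not> ?thesis"
        have "sat M w (BBox \<pi> \<phi>)"
        proof (simp, intro allI impI)
          fix v assume wv: "(v, w) \<in> rel M \<pi>"
          hence v: "v \<in> W M" using rel_W[OF BBoxR.prems] by auto
          have "\<forall>\<chi>. \<chi> |\<in>| \<Gamma> \<longrightarrow> sat M v \<chi>" using G wv by auto
          moreover have "sat_seq M v \<Gamma> (finsert \<phi> (boxes \<pi> \<Delta>))"
            using BBoxR.IH[OF BBoxR.prems] v by blast
          ultimately have "\<exists>\<psi>. \<psi> |\<in>| finsert \<phi> (boxes \<pi> \<Delta>) \<and> sat M v \<psi>"
            unfolding sat_seq_def by blast
          then show "sat M v \<phi>" using N wv by auto
        qed
        then show False using N by auto
      qed
    qed
  qed
next
  case (SeqL \<pi>0 \<pi>1 \<phi> \<Gamma> \<Delta>)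
  show ?case by (rule ballI, rule SeqL_w[OF bspec[OF SeqL.IH[OF SeqL.prems]]], assumption+)
next
  case (SeqR \<Gamma> \<pi>0 \<pi>1 \<phi> \<Delta>)
  show ?case by (rule ballI, rule SeqR_w[OF bspec[OF SeqR.IH[OF SeqR.prems]]], assumption+)
next
  case (ChoiceL \<pi>0 \<phi> \<pi>1 \<Gamma> \<Delta>)
  show ?case by (rule ballI, rule ChoiceL_w[OF bspec[OF ChoiceL.IH[OF ChoiceL.prems]]], assumption+)
next
  case (ChoiceR \<Gamma> \<pi>0 \<phi> \<Delta> \<pi>1)
  show ?case by (rule ballI, rule ChoiceR_w[OF bspec[OF ChoiceR.IH(1)[OF ChoiceR.prems]] bspec[OF ChoiceR.IH(2)[OF ChoiceR.prems]]], assumption+)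
next
  case (StarL \<phi> \<pi> \<Gamma> \<Delta>)
  show ?case
  proof (intro ballI)
    fix w assume w: "w \<in> W M"
    have key: "sat M w (Box (Star \<pi>) \<phi>) \<Longrightarrow> sat M w \<phi> \<and> sat M w (Box \<pi> (Box (Star \<pi>) \<phi>))"
    proof -
      assume a: "sat M w (Box (Star \<pi>) \<phi>)"
      have ww: "(w, w) \<in> Id_on (W M) \<union> (rel M \<pi>)\<^sup>+" using w by (simp add: Id_on_def)
      have a': "\<forall>v. (w, v) \<in> Id_on (W M) \<union> (rel M \<pi>)\<^sup>+ \<longrightarrow> sat M v \<phi>"
        using a by (simp only: sat.simps rel.simps)
      have "sat M w \<phi>" using a' ww by blast
      moreover have "\<forall>u v. (w, u) \<in> rel M \<pi> \<longrightarrow> (u, v) \<in> Id_on (W M) \<union> (rel M \<pi>)\<^sup>+ \<longrightarrow> sat M v \<phi>"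
      proof (intro allI impI)
        fix u v assume wu: "(w, u) \<in> rel M \<pi>" and uv: "(u, v) \<in> Id_on (W M) \<union> (rel M \<pi>)\<^sup>+"
        have "(w, v) \<in> (rel M \<pi>)\<^sup>+"
        proof (cases "(u, v) \<in> Id_on (W M)")
          case True then have "u = v" by (simp add: Id_on_def)
          then show ?thesis using wu by simp
        next
          case False then have "(u, v) \<in> (rel M \<pi>)\<^sup>+" using uv by blast
          then show ?thesis by (rule trancl_into_trancl2[OF wu])
        qed
        then have "(w, v) \<in> Id_on (W M) \<union> (rel M \<pi>)\<^sup>+" by blast
        thus "sat M v \<phi>" using a' by blast
      qed
      hence "sat M w (Box \<pi> (Box (Star \<pi>) \<phi>))" by simp
      ultimately show ?thesis by blast
    qed
    show "sat_seq M w (finsert (Box (Star \<pi>) \<phi>) \<Gamma>) \<Delta>"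
    proof -
      have "sat_seq M w (finsert \<phi> (finsert (Box \<pi> (Box (Star \<pi>) \<phi>)) \<Gamma>)) \<Delta>"
        using StarL.IH[OF StarL.prems] w by blast
      then show ?thesis using key unfolding sat_seq_def by (metis finsert_iff)
    qed
  qed
next
  case (StarR \<phi> \<Gamma> \<pi>)
  show ?case
  proof (intro ballI)
    fix w assume w: "w \<in> W M"
    show "sat_seq M w (finsert \<phi> (boxes (Star \<pi>) \<Gamma>)) {|Box (Star \<pi>) \<phi>|}"
      unfolding sat_seq_def
    proof (intro impI)
      assume A: "\<forall>\<chi>. \<chi> |\<in>| finsert \<phi> (boxes (Star \<pi>) \<Gamma>) \<longrightarrow> sat M w \<chi>"
      have phw: "sat M w \<phi>" using A by auto
      have Gs: "\<And>v \<chi>. (w, v) \<in> (rel M \<pi>)\<^sup>* \<Longrightarrow> v \<in> W M \<Longrightarrow> \<chi> |\<in>| \<Gamma> \<Longrightarrow> sat M v \<chi>"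
      proof -
        fix v \<chi> assume wv: "(w, v) \<in> (rel M \<pi>)\<^sup>*" and v: "v \<in> W M" and c: "\<chi> |\<in>| \<Gamma>"
        have "(w, v) \<in> Id_on (W M) \<union> (rel M \<pi>)\<^sup>+"
          using wv v by (auto simp: Id_on_def rtrancl_eq_or_trancl)
        moreover have "Box (Star \<pi>) \<chi> |\<in>| finsert \<phi> (boxes (Star \<pi>) \<Gamma>)" using c by simp
        hence "sat M w (Box (Star \<pi>) \<chi>)" using A by blast
        ultimately show "sat M v \<chi>" by (simp only: sat.simps rel.simps)
      qed
      have RW: "\<And>x y. (x, y) \<in> (rel M \<pi>)\<^sup>* \<Longrightarrow> x \<in> W M \<Longrightarrow> y \<in> W M"
      proof -
        fix x y assume "(x, y) \<in> (rel M \<pi>)\<^sup>*" "x \<in> W M"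
        thus "y \<in> W M"
          by (induction rule: rtrancl_induct) (use rel_W[OF StarR.prems] in auto)
      qed
      have all: "\<And>v. (w, v) \<in> (rel M \<pi>)\<^sup>* \<Longrightarrow> sat M v \<phi>"
      proof -
        fix v assume wv: "(w, v) \<in> (rel M \<pi>)\<^sup>*"
        show "sat M v \<phi>"
        proof (rule star_reach[OF wv, where P = "\<lambda>x. sat M x \<phi>"])
          show "sat M w \<phi>" by (rule phw)
        next
          fix x y assume px: "sat M x \<phi>" and wx: "(w, x) \<in> (rel M \<pi>)\<^sup>*" and xy: "(x, y) \<in> rel M \<pi>"
          have x: "x \<in> W M" using RW[OF wx w] .
          have "\<forall>\<chi>. \<chi> |\<in>| finsert \<phi> \<Gamma> \<longrightarrow> sat M x \<chi>" using px Gs[OF wx x] by auto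
          moreover have "sat_seq M x (finsert \<phi> \<Gamma>) {|Box \<pi> \<phi>|}"
            using StarR.IH[OF StarR.prems] x by blast
          ultimately have "sat M x (Box \<pi> \<phi>)" unfolding sat_seq_def by simp
          thus "sat M y \<phi>" using xy by simp
        qed
      qed
      have "sat M w (Box (Star \<pi>) \<phi>)"
        using all by (auto simp: Id_on_def dest: trancl_into_rtrancl)
      thus "\<exists>\<psi>. \<psi> |\<in>| {|Box (Star \<pi>) \<phi>|} \<and> sat M w \<psi>" by auto
    qed
  qed
next
  case (TestL \<Gamma> \<phi> \<Delta> \<psi>)
  show ?case by (rule ballI, rule TestL_w[OF _ bspec[OF TestL.IH(1)[OF TestL.prems]] bspec[OF TestL.IH(2)[OF TestL.prems]]], assumption+)
next
  case (TestR \<phi> \<Gamma> \<psi> \<Delta>)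
  show ?case by (rule ballI, rule TestR_w[OF bspec[OF TestR.IH[OF TestR.prems]]], assumption+)
qed

theorem mainTheorem1:
  fixes \<Gamma> \<Delta> :: "('p, 'a) fm fset" and M :: "('p, 'a, 's) model"
  assumes "provable \<Gamma> \<Delta>"
      and "is_model M"
  shows "model_sat_seq M \<Gamma> \<Delta>"
  using sound[OF assms] unfolding model_sat_seq_def by blast

end
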